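(* For every formula $\varphi$ there exists a formula $\varphi'$ with $\varphi'\equiv\varphi$ such that $\varphi'$ is in first normal form (i.e. $\mathrm{ubw}(\varphi') = 0$), $|\varphi'| \leq 4^{2|\varphi|}\cdot|\varphi|$, for every subformula $\mathbf{GF}\psi$ of $\varphi'$ the formula $\psi$ is a subformula of $\varphi$, and every subformula of $\varphi'$ of the form $\mathbf{FG}\chi$ is also a subformula of $\varphi$.
   Context: Fix a finite set $Ap$ of atomic propositions. A word is an infinite sequence $w = w[0]w[1]\dots$ of letters of $2^{Ap}$, and $w_i$ denotes the suffix $w[i]w[i+1]\dots$. Formulas are generated by $\varphi ::= \mathbf{true} \mid \mathbf{false} \mid a \mid \neg a \mid \varphi\wedge\varphi \mid \varphi\vee\varphi \mid \mathbf{X}\varphi \mid \varphi\,\mathbf{U}\,\varphi \mid \varphi\,\mathbf{W}\,\varphi \mid \mathbf{GF}\varphi \mid \mathbf{FG}\varphi$ ($a\in Ap$), where $\mathbf{GF}$, $\mathbf{FG}$ are single unary operators (limit operators). Semantics: $w\models a$ iff $a\in w[0]$, $w\models\neg a$ iff $a\notin w[0]$, Boolean constants and connectives as usual; $w\models\mathbf{X}\varphi$ iff $w_1\models\varphi$; $w\models\varphi\mathbf{U}\psi$ iff $\exists k$: $w_k\models\psi$ and $\forall j<k$: $w_j\models\varphi$; $w\models\varphi\mathbf{W}\psi$ iff ($\forall k$: $w_k\models\varphi$) or $w\models\varphi\mathbf{U}\psi$; $w\models\mathbf{GF}\varphi$ iff $w_k\models\varphi$ for infinitely many $k$; $w\models\mathbf{FG}\varphi$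 iff $\exists n\,\forall k\geq n$: $w_k\models\varphi$. $\varphi\equiv\psi$ means both are satisfied by the same words. The syntax tree $T_\varphi$ has leaves $\mathbf{true},\mathbf{false},a,\neg a$ and one internal node per operator occurrence; $|\varphi|$ is its number of nodes. A $\mathbf{U}$-node (resp. $\mathbf{W}$-node, limit node) is a node whose subformula has top operator $\mathbf{U}$ (resp. $\mathbf{W}$, $\mathbf{GF}$ or $\mathbf{FG}$). A node is under another if it is a proper descendant of it. $\mathrm{ubw}(\varphi)$ is the number of $\mathbf{U}$-nodes of $T_\varphi$ that are under some $\mathbf{W}$-node but not under any limit node. A formula $\varphi$ is in first normal form if $\mathrm{ubw}(\varphi)=0$. *)

theory Defs
  imports Main
begin

text \<open>LTL formulas in negation normal form with limit operators GF and FG,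
  over atomic propositions of type 'a (the finite set Ap is the type 'a, assumed finite
  in the theorem).\<close>

datatype 'a ltl =
    LTrue
  | LFalse
  | Prop 'a
  | NProp 'a
  | And "'a ltl" "'a ltl"
  | Or "'a ltl" "'a ltl"
  | Next "'a ltl"
  | Until "'a ltl" "'a ltl"
  | WeakUntil "'a ltl" "'a ltl"
  | GF "'a ltl"
  | FG "'a ltl"

type_synonym 'a word = "nat \<Rightarrow> 'a set"

definition suffix :: "nat \<Rightarrow> 'a word \<Rightarrow> 'a word" where
  "suffix i w = (\<lambda>n. w (i + n))"

fun sat :: "'a word \<Rightarrow> 'a ltl \<Rightarrow> bool" where
  "sat w LTrue = True"
| "sat w LFalse = False"
| "sat w (Prop a) = (a \<in> w 0)"
| "sat w (NProp a) = (a \<notin> w 0)"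
| "sat w (And \<phi> \<psi>) = (sat w \<phi> \<and> sat w \<psi>)"
| "sat w (Or \<phi> \<psi>) = (sat w \<phi> \<or> sat w \<psi>)"
| "sat w (Next \<phi>) = sat (suffix 1 w) \<phi>"
| "sat w (Until \<phi> \<psi>) =
     (\<exists>k. sat (suffix k w) \<psi> \<and> (\<forall>j<k. sat (suffix j w) \<phi>))"
| "sat w (WeakUntil \<phi> \<psi>) =
     ((\<forall>k. sat (suffix k w) \<phi>) \<or>
      (\<exists>k. sat (suffix k w) \<psi> \<and> (\<forall>j<k. sat (suffix j w) \<phi>)))"
| "sat w (GF \<phi>) = infinite {k. sat (suffix k w) \<phi>}"
| "sat w (FG \<phi>) = (\<exists>n. \<forall>k\<ge>n. sat (suffix k w) \<phi>)"

definition equiv_ltl :: "'a ltl \<Rightarrow> 'a ltl \<Rightarrow> bool" where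
  "equiv_ltl \<phi> \<psi> \<longleftrightarrow> (\<forall>w. sat w \<phi> = sat w \<psi>)"

fun size_ltl :: "'a ltl \<Rightarrow> nat" where
  "size_ltl LTrue = 1"
| "size_ltl LFalse = 1"
| "size_ltl (Prop a) = 1"
| "size_ltl (NProp a) = 1"
| "size_ltl (And \<phi> \<psi>) = 1 + size_ltl \<phi> + size_ltl \<psi>"
| "size_ltl (Or \<phi> \<psi>) = 1 + size_ltl \<phi> + size_ltl \<psi>"
| "size_ltl (Next \<phi>) = 1 + size_ltl \<phi>"
| "size_ltl (Until \<phi> \<psi>) = 1 + size_ltl \<phi> + size_ltl \<psi>"
| "size_ltl (WeakUntil \<phi> \<psi>) = 1 + size_ltl \<phi> + size_ltl \<psi>"
| "size_ltl (GF \<phi>) = 1 + size_ltl \<phi>"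
| "size_ltl (FG \<phi>) = 1 + size_ltl \<phi>"

fun subformulas :: "'a ltl \<Rightarrow> 'a ltl set" where
  "subformulas LTrue = {LTrue}"
| "subformulas LFalse = {LFalse}"
| "subformulas (Prop a) = {Prop a}"
| "subformulas (NProp a) = {NProp a}"
| "subformulas (And \<phi> \<psi>) = insert (And \<phi> \<psi>) (subformulas \<phi> \<union> subformulas \<psi>)"
| "subformulas (Or \<phi> \<psi>) = insert (Or \<phi> \<psi>) (subformulas \<phi> \<union> subformulas \<psi>)"
| "subformulas (Next \<phi>) = insert (Next \<phi>) (subformulas \<phi>)"
| "subformulas (Until \<phi> \<psi>) = insert (Until \<phi> \<psi>) (subformulas \<phi> \<union> subformulas \<psi>)"
| "subformulas (WeakUntil \<phi> \<psi>) =
     insert (WeakUntil \<phi> \<psi>) (subformulas \<phi> \<union> subformulas \<psi>)"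
| "subformulas (GF \<phi>) = insert (GF \<phi>) (subformulas \<phi>)"
| "subformulas (FG \<phi>) = insert (FG \<phi>) (subformulas \<phi>)"

text \<open>ubw_aux b \<phi>: number of U-nodes of \<phi> that are under some W-node (where b says
  whether \<phi> itself is already under a W-node of the enclosing tree) and not under any
  limit node.\<close>
fun ubw_aux :: "bool \<Rightarrow> 'a ltl \<Rightarrow> nat" where
  "ubw_aux b LTrue = 0"
| "ubw_aux b LFalse = 0"
| "ubw_aux b (Prop a) = 0"
| "ubw_aux b (NProp a) = 0"
| "ubw_aux b (And \<phi> \<psi>) = ubw_aux b \<phi> + ubw_aux b \<psi>"
| "ubw_aux b (Or \<phi> \<psi>) = ubw_aux b \<phi> + ubw_aux b \<psi>"
| "ubw_aux b (Next \<phi>) = ubw_aux b \<phi>"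
| "ubw_aux b (Until \<phi> \<psi>) = (if b then 1 else 0) + ubw_aux b \<phi> + ubw_aux b \<psi>"
| "ubw_aux b (WeakUntil \<phi> \<psi>) = ubw_aux True \<phi> + ubw_aux True \<psi>"
| "ubw_aux b (GF \<phi>) = 0"
| "ubw_aux b (FG \<phi>) = 0"

definition ubw :: "'a ltl \<Rightarrow> nat" where
  "ubw \<phi> = ubw_aux False \<phi>"

definition first_normal_form :: "'a ltl \<Rightarrow> bool" where
  "first_normal_form \<phi> \<longleftrightarrow> ubw \<phi> = 0"

end

theory Submission
  imports Defs "HOL-Library.Infinite_Set"
begin

fun nfw :: "'a ltl set \<Rightarrow> 'a ltl \<Rightarrow> 'a ltl" where
  "nfw M (And a b) = And (nfw M a) (nfw M b)"
| "nfw M (Or a b) = Or (nfw M a) (nfw M b)"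
| "nfw M (Next a) = Next (nfw M a)"
| "nfw M (Until a b) = (if Until a b \<in> M then WeakUntil (nfw M a) (nfw M b) else LFalse)"
| "nfw M (WeakUntil a b) = WeakUntil (nfw M a) (nfw M b)"
| "nfw M x = x"

fun nft :: "'a ltl set \<Rightarrow> 'a ltl \<Rightarrow> 'a ltl" where
  "nft M (And a b) = And (nft M a) (nft M b)"
| "nft M (Or a b) = Or (nft M a) (nft M b)"
| "nft M (Next a) = Next (nft M a)"
| "nft M (Until a b) = Until (nft M a) (nft M b)"
| "nft M (WeakUntil a b) = Until (nft M a) (Or (nft M b) (WeakUntil (nfw M a) LFalse))"
| "nft M x = x"

fun build :: "'a ltl list \<Rightarrow> 'a ltl set \<Rightarrow> 'a ltl \<Rightarrow> 'a ltl" where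
  "build [] M f = nft M f"
| "build (m # L) M f = Or (And (GF m) (build L (insert m M) f)) (build L M f)"

fun sublist :: "'a ltl \<Rightarrow> 'a ltl list" where
  "sublist (And a b) = And a b # sublist a @ sublist b"
| "sublist (Or a b) = Or a b # sublist a @ sublist b"
| "sublist (Next a) = Next a # sublist a"
| "sublist (Until a b) = Until a b # sublist a @ sublist b"
| "sublist (WeakUntil a b) = WeakUntil a b # sublist a @ sublist b"
| "sublist (GF a) = GF a # sublist a"
| "sublist (FG a) = FG a # sublist a"
| "sublist x = [x]"

lemma sublist_set: "set (sublist f) = subformulas f"
  by (induction f) auto

lemma sublist_len: "length (sublist f) = size_ltl f"
  by (induction f) auto

lemma self_sub: "f \<in> subformulas f"
  by (cases f) auto

lemma sub_trans: "x \<in> subformulas y \<Longrightarrow> subformulas x \<subseteq> subformulas y"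
  by (induction y) auto

lemma sub_size: "x \<in> subformulas y \<Longrightarrow> size_ltl x \<le> size_ltl y"
  by (induction y) auto

lemma size_pos: "size_ltl f \<ge> 1"
  by (cases f) auto

lemma suffix_suffix[simp]: "suffix k (suffix i w) = suffix (i + k) w"
  unfolding suffix_def by (simp add: add.assoc)

lemma suffix_0[simp]: "suffix 0 w = w"
  unfolding suffix_def by simp

lemma GF_inv: "sat (suffix i w) (GF m) = sat w (GF m)"
proof -
  have "(\<forall>a. \<exists>n\<ge>a. sat (suffix (i+n) w) m) = (\<forall>a. \<exists>n\<ge>a. sat (suffix n w) m)"
  proof
    assume H: "\<forall>a. \<exists>n\<ge>a. sat (suffix (i+n) w) m"
    show "\<forall>a. \<exists>n\<ge>a. sat (suffix n w) m"
    proof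
      fix a
      obtain n where "n \<ge> a" "sat (suffix (i+n) w) m" using H by blast
      then show "\<exists>n\<ge>a. sat (suffix n w) m" by (intro exI[of _ "i+n"]) auto
    qed
  next
    assume H: "\<forall>a. \<exists>n\<ge>a. sat (suffix n w) m"
    show "\<forall>a. \<exists>n\<ge>a. sat (suffix (i+n) w) m"
    proof
      fix a
      obtain n where "n \<ge> i + a" "sat (suffix n w) m" using H by blast
      then show "\<exists>n\<ge>a. sat (suffix (i+n) w) m" by (intro exI[of _ "n - i"]) auto
    qed
  qed
  then show ?thesis by (simp add: infinite_nat_iff_unbounded_le)
qed

lemma GF_all_inv: "\<forall>m\<in>M. sat w (GF m) \<Longrightarrow> \<forall>m\<in>M. sat (suffix k w) (GF m)"
  using GF_inv by blast

lemma nfw_sound: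
  "(\<forall>m\<in>M. sat w (GF m)) \<Longrightarrow> sat w (nfw M f) \<Longrightarrow> sat w f"
proof (induction f arbitrary: w)
  case (Next f)
  have "\<forall>m\<in>M. sat (suffix 1 w) (GF m)" using Next.prems(1) GF_inv by blast
  then show ?case using Next.IH Next.prems(2) by simp
next
  case (Until a b)
  show ?case
  proof (cases "Until a b \<in> M")
    case True
    have gf: "sat w (GF (Until a b))" using Until.prems True by blast
    have IHa: "\<And>k. sat (suffix k w) (nfw M a) \<Longrightarrow> sat (suffix k w) a"
      using Until.IH(1) GF_all_inv[OF Until.prems(1)] by blast
    have IHb: "\<And>k. sat (suffix k w) (nfw M b) \<Longrightarrow> sat (suffix k w) b"
      using Until.IH(2) GF_all_inv[OF Until.prems(1)] by blast
    have wu: "(\<forall>k. sat (suffix k w) a) \<or> (\<exists>k. sat (suffix k w) b \<and> (\<forall>j<k. sat (suffix j w) a))"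
    proof -
      have "(\<forall>k. sat (suffix k w) (nfw M a)) \<or> (\<exists>k. sat (suffix k w) (nfw M b) \<and> (\<forall>j<k. sat (suffix j w) (nfw M a)))"
        using Until.prems(2) True by simp
      then show ?thesis using IHa IHb by blast
    qed
    then show ?thesis
    proof
      assume G: "\<forall>k. sat (suffix k w) a"
      from gf obtain n where "sat (suffix n w) (Until a b)"
        unfolding sat.simps(10) infinite_nat_iff_unbounded_le by blast
      then obtain k where "sat (suffix (n+k) w) b" by auto
      then show ?thesis using G by auto
    qed auto
  next
    case False
    then show ?thesis using Until.prems by simp
  qed
next
  case (WeakUntil a b)
  have IHa: "\<And>k. sat (suffix k w) (nfw M a) \<Longrightarrow> sat (suffix k w) a"
    using WeakUntil.IH(1) GF_all_inv[OF WeakUntil.prems(1)] by blast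
  have IHb: "\<And>k. sat (suffix k w) (nfw M b) \<Longrightarrow> sat (suffix k w) b"
    using WeakUntil.IH(2) GF_all_inv[OF WeakUntil.prems(1)] by blast
  have "(\<forall>k. sat (suffix k w) (nfw M a)) \<or> (\<exists>k. sat (suffix k w) (nfw M b) \<and> (\<forall>j<k. sat (suffix j w) (nfw M a)))"
    using WeakUntil.prems(2) by simp
  then show ?case using IHa IHb by simp blast
qed auto

lemma nfw_complete:
  "\<forall>m\<in>subformulas f. m \<notin> M \<longrightarrow> \<not> sat w (GF m) \<Longrightarrow>
   \<exists>N. \<forall>i\<ge>N. sat (suffix i w) f \<longrightarrow> sat (suffix i w) (nfw M f)"
proof (induction f)
  case (And a b)
  then obtain N1 N2 where "\<forall>i\<ge>N1. sat (suffix i w) a \<longrightarrow> sat (suffix i w) (nfw M a)"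
    "\<forall>i\<ge>N2. sat (suffix i w) b \<longrightarrow> sat (suffix i w) (nfw M b)" by auto
  then show ?case by (intro exI[of _ "max N1 N2"]) auto
next
  case (Or a b)
  then obtain N1 N2 where "\<forall>i\<ge>N1. sat (suffix i w) a \<longrightarrow> sat (suffix i w) (nfw M a)"
    "\<forall>i\<ge>N2. sat (suffix i w) b \<longrightarrow> sat (suffix i w) (nfw M b)" by auto
  then show ?case by (intro exI[of _ "max N1 N2"]) auto
next
  case (Next a)
  then obtain N1 where "\<forall>i\<ge>N1. sat (suffix i w) a \<longrightarrow> sat (suffix i w) (nfw M a)" by auto
  then show ?case by (intro exI[of _ "N1"]) auto
next
  case (Until a b)
  show ?case
  proof (cases "Until a b \<in> M")
    case True
    from Until obtain N1 N2 where A: "\<forall>i\<ge>N1. sat (suffix i w) a \<longrightarrow> sat (suffix i w) (nfw M a)"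
      and B: "\<forall>i\<ge>N2. sat (suffix i w) b \<longrightarrow> sat (suffix i w) (nfw M b)" by auto
    show ?thesis
    proof (intro exI[of _ "max N1 N2"] allI impI)
      fix i assume i: "max N1 N2 \<le> i" and s: "sat (suffix i w) (Until a b)"
      then obtain k where "sat (suffix (i+k) w) b" "\<forall>j<k. sat (suffix (i+j) w) a" by auto
      then have "sat (suffix (i+k) w) (nfw M b)" "\<forall>j<k. sat (suffix (i+j) w) (nfw M a)"
        using A B i by auto
      then show "sat (suffix i w) (nfw M (Until a b))" using True by auto
    qed
  next
    case False
    then have "\<not> sat w (GF (Until a b))" using Until.prems by simp
    then have "finite {k. sat (suffix k w) (Until a b)}" by (simp only: sat.simps(10) not_not)
    then obtain N where "{k. sat (suffix k w) (Until a b)} \<subseteq> {..<N}"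
      using finite_nat_bounded by blast
    then have "\<forall>i\<ge>N. \<not> sat (suffix i w) (Until a b)"
    proof (intro allI impI)
      fix i assume "N \<le> i" "{k. sat (suffix k w) (Until a b)} \<subseteq> {..<N}"
      moreover have "i \<notin> {..<N}" using \<open>N \<le> i\<close> by simp
      ultimately show "\<not> sat (suffix i w) (Until a b)" by blast
    qed
    then show ?thesis by blast
  qed
next
  case (WeakUntil a b)
  from WeakUntil obtain N1 N2 where A: "\<forall>i\<ge>N1. sat (suffix i w) a \<longrightarrow> sat (suffix i w) (nfw M a)"
    and B: "\<forall>i\<ge>N2. sat (suffix i w) b \<longrightarrow> sat (suffix i w) (nfw M b)" by auto
  show ?case
  proof (intro exI[of _ "max N1 N2"] allI impI)
    fix i assume i: "max N1 N2 \<le> i" and s: "sat (suffix i w) (WeakUntil a b)"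
    then show "sat (suffix i w) (nfw M (WeakUntil a b))"
      using A B by auto (metis add.assoc le_add1 le_trans)+
  qed
qed auto

lemma nft_sound:
  "(\<forall>m\<in>M. sat w (GF m)) \<Longrightarrow> sat w (nft M f) \<Longrightarrow> sat w f"
proof (induction f arbitrary: w)
  case (Next f)
  have "\<forall>m\<in>M. sat (suffix 1 w) (GF m)" using Next.prems(1) GF_inv by blast
  then show ?case using Next.IH Next.prems(2) by simp
next
  case (Until a b)
  have IHa: "\<And>k. sat (suffix k w) (nft M a) \<Longrightarrow> sat (suffix k w) a"
    using Until.IH(1) GF_all_inv[OF Until.prems(1)] by blast
  have IHb: "\<And>k. sat (suffix k w) (nft M b) \<Longrightarrow> sat (suffix k w) b"
    using Until.IH(2) GF_all_inv[OF Until.prems(1)] by blast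
  have "\<exists>k. sat (suffix k w) (nft M b) \<and> (\<forall>j<k. sat (suffix j w) (nft M a))"
    using Until.prems(2) by simp
  then show ?case using IHa IHb by simp blast
next
  case (WeakUntil a b)
  have IHa: "\<And>k. sat (suffix k w) (nft M a) \<Longrightarrow> sat (suffix k w) a"
    using WeakUntil.IH(1) GF_all_inv[OF WeakUntil.prems(1)] by blast
  have IHb: "\<And>k. sat (suffix k w) (nft M b) \<Longrightarrow> sat (suffix k w) b"
    using WeakUntil.IH(2) GF_all_inv[OF WeakUntil.prems(1)] by blast
  have W: "\<And>k. sat (suffix k w) (nfw M a) \<Longrightarrow> sat (suffix k w) a"
    using nfw_sound GF_all_inv[OF WeakUntil.prems(1)] by blast
  obtain k where k: "sat (suffix k w) (nft M b) \<or> (\<forall>i. sat (suffix (k+i) w) (nfw M a))"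
    "\<forall>j<k. sat (suffix j w) (nft M a)"
    using WeakUntil.prems(2) by auto
  show ?case
  proof (cases "sat (suffix k w) (nft M b)")
    case True
    then show ?thesis using k IHa IHb by simp blast
  next
    case False
    then have G: "\<forall>i. sat (suffix (k+i) w) a" using k W by blast
    have "\<forall>i. sat (suffix i w) a"
    proof
      fix i show "sat (suffix i w) a"
      proof (cases "i < k")
        case True then show ?thesis using k IHa by blast
      next
        case False then show ?thesis using G[rule_format, of "i - k"] by simp
      qed
    qed
    then show ?thesis by simp
  qed
qed auto

lemma GF_none_inv: "\<forall>m\<in>S. m \<notin> M \<longrightarrow> \<not> sat w (GF m) \<Longrightarrow>
   \<forall>m\<in>S. m \<notin> M \<longrightarrow> \<not> sat (suffix k w) (GF m)"
  using GF_inv by blast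

lemma nft_complete:
  "\<forall>m\<in>subformulas f. m \<notin> M \<longrightarrow> \<not> sat w (GF m) \<Longrightarrow> sat w f \<Longrightarrow> sat w (nft M f)"
proof (induction f arbitrary: w)
  case (Next f)
  have C: "\<forall>m\<in>subformulas f. m \<notin> M \<longrightarrow> \<not> sat w (GF m)"
    using Next.prems(1) by simp
  have "sat (suffix 1 w) (nft M f)" using Next.IH[OF GF_none_inv[OF C, of 1]] Next.prems(2) by simp
  then show ?case by simp
next
  case (Until a b)
  have Ca: "\<forall>m\<in>subformulas a. m \<notin> M \<longrightarrow> \<not> sat w (GF m)"
    using Until.prems(1) by simp
  have Cb: "\<forall>m\<in>subformulas b. m \<notin> M \<longrightarrow> \<not> sat w (GF m)"
    using Until.prems(1) by simp
  have IHa: "\<And>k. sat (suffix k w) a \<Longrightarrow> sat (suffix k w) (nft M a)"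
    using Until.IH(1) GF_none_inv[OF Ca] by blast
  have IHb: "\<And>k. sat (suffix k w) b \<Longrightarrow> sat (suffix k w) (nft M b)"
    using Until.IH(2) GF_none_inv[OF Cb] by blast
  have "\<exists>k. sat (suffix k w) b \<and> (\<forall>j<k. sat (suffix j w) a)"
    using Until.prems(2) by simp
  then show ?case using IHa IHb by simp blast
next
  case (WeakUntil a b)
  have Ca: "\<forall>m\<in>subformulas a. m \<notin> M \<longrightarrow> \<not> sat w (GF m)"
    using WeakUntil.prems(1) by simp
  have Cb: "\<forall>m\<in>subformulas b. m \<notin> M \<longrightarrow> \<not> sat w (GF m)"
    using WeakUntil.prems(1) by simp
  have IHa: "\<And>k. sat (suffix k w) a \<Longrightarrow> sat (suffix k w) (nft M a)"
    using WeakUntil.IH(1) GF_none_inv[OF Ca] by blast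
  have IHb: "\<And>k. sat (suffix k w) b \<Longrightarrow> sat (suffix k w) (nft M b)"
    using WeakUntil.IH(2) GF_none_inv[OF Cb] by blast
  have "(\<forall>k. sat (suffix k w) a) \<or> (\<exists>k. sat (suffix k w) b \<and> (\<forall>j<k. sat (suffix j w) a))"
    using WeakUntil.prems(2) by simp
  then show ?case
  proof
    assume G: "\<forall>k. sat (suffix k w) a"
    have "\<forall>m\<in>subformulas a. m \<notin> M \<longrightarrow> \<not> sat w (GF m)"
      using WeakUntil.prems(1) by simp
    from nfw_complete[OF this] obtain N where
      N: "\<forall>i\<ge>N. sat (suffix i w) a \<longrightarrow> sat (suffix i w) (nfw M a)" by blast
    have "\<forall>i. sat (suffix (N+i) w) (nfw M a)" using N G by simp
    then have "sat (suffix N w) (Or (nft M b) (WeakUntil (nfw M a) LFalse))" by simp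
    moreover have "\<forall>j<N. sat (suffix j w) (nft M a)" using G IHa by blast
    ultimately show ?thesis by auto
  next
    assume "\<exists>k. sat (suffix k w) b \<and> (\<forall>j<k. sat (suffix j w) a)"
    then show ?thesis using IHa IHb by simp blast
  qed
qed auto

lemma build_sound:
  "(\<forall>m\<in>M. sat w (GF m)) \<Longrightarrow> sat w (build L M f) \<Longrightarrow> sat w f"
proof (induction L arbitrary: M)
  case Nil
  then show ?case using nft_sound by simp
next
  case (Cons m L)
  from Cons.prems(2) have "(sat w (GF m) \<and> sat w (build L (insert m M) f)) \<or> sat w (build L M f)"
    by (simp only: build.simps sat.simps(5,6))
  then show ?case
  proof
    assume H: "sat w (GF m) \<and> sat w (build L (insert m M) f)"
    then have "\<forall>m'\<in>insert m M. sat w (GF m')" using Cons.prems(1) by blast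
    then show ?thesis using Cons.IH H by blast
  qed (use Cons in blast)
qed

lemma build_complete:
  "\<forall>m\<in>subformulas f. m \<notin> M \<longrightarrow> m \<notin> set L \<longrightarrow> \<not> sat w (GF m) \<Longrightarrow> sat w f
    \<Longrightarrow> sat w (build L M f)"
proof (induction L arbitrary: M)
  case Nil
  then show ?case using nft_complete by simp
next
  case (Cons m L)
  show ?case
  proof (cases "sat w (GF m)")
    case True
    have "\<forall>m'\<in>subformulas f. m' \<notin> insert m M \<longrightarrow> m' \<notin> set L \<longrightarrow> \<not> sat w (GF m')"
      using Cons.prems(1) by auto
    then have "sat w (build L (insert m M) f)" using Cons.IH Cons.prems(2) by blast
    then show ?thesis using True by (simp only: build.simps sat.simps(5,6)) blast
  next
    case False
    have "\<forall>m'\<in>subformulas f. m' \<notin> M \<longrightarrow> m' \<notin> set L \<longrightarrow> \<not> sat w (GF m')"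
      using Cons.prems(1) False by auto
    then have "sat w (build L M f)" using Cons.IH Cons.prems(2) by blast
    then show ?thesis by (simp only: build.simps sat.simps(5,6)) blast
  qed
qed

lemma nfw_size: "size_ltl (nfw M f) \<le> size_ltl f"
  by (induction f) auto

lemma sq_aux1: "(x::nat) \<le> 2*a^2 \<Longrightarrow> y \<le> 2*b^2 \<Longrightarrow> 1 + x + y \<le> 2 * (1 + a + b)^2"
  by (simp add: power2_eq_square algebra_simps)

lemma sq_aux2: "(x::nat) \<le> 2*a^2 \<Longrightarrow> 1 + x \<le> 2 * (1 + a)^2"
  by (simp add: power2_eq_square algebra_simps)

lemma sq_aux3: "(x::nat) \<le> 2*a^2 \<Longrightarrow> y \<le> 2*b^2 \<Longrightarrow> z \<le> a \<Longrightarrow> 1 \<le> a \<Longrightarrow> 1 \<le> b \<Longrightarrow>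
   1 + x + (1 + y + (1 + z + 1)) \<le> 2 * (1 + a + b)^2"
proof -
  assume "x \<le> 2*a^2" "y \<le> 2*b^2" "z \<le> a" "1 \<le> a" "1 \<le> b"
  moreover have "1 \<le> a * b" using \<open>1 \<le> a\<close> \<open>1 \<le> b\<close> using mult_le_mono[of 1 a 1 b] by simp
  ultimately show ?thesis by (simp add: power2_eq_square algebra_simps)
qed

lemma nft_size: "size_ltl (nft M f) \<le> 2 * (size_ltl f)^2"
proof (induction f)
  case (And a b) then show ?case using sq_aux1 by simp
next
  case (Or a b) then show ?case using sq_aux1 by simp
next
  case (Until a b) then show ?case using sq_aux1 by simp
next
  case (Next a) then show ?case using sq_aux2 by simp
next
  case (WeakUntil a b)
  then show ?case using sq_aux3[OF WeakUntil.IH nfw_size size_pos size_pos] by simp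
qed (auto simp: power2_eq_square)

lemma build_size:
  "\<forall>m\<in>set L. size_ltl m \<le> n \<Longrightarrow> \<forall>M. size_ltl (nft M f) \<le> 2*n^2 \<Longrightarrow>
   size_ltl (build L M f) + (n+3) \<le> 2 ^ length L * (2*n^2 + n + 3)"
proof (induction L arbitrary: M)
  case Nil
  then show ?case by (simp add: algebra_simps)
next
  case (Cons m L)
  have A: "size_ltl (build L (insert m M) f) + (n+3) \<le> 2 ^ length L * (2*n^2 + n + 3)"
    using Cons by simp
  have B: "size_ltl (build L M f) + (n+3) \<le> 2 ^ length L * (2*n^2 + n + 3)"
    using Cons by simp
  have "size_ltl m \<le> n" using Cons.prems by simp
  then show ?case using A B by simp
qed

lemma nfw_GF: "GF x \<in> subformulas (nfw M f) \<Longrightarrow> GF x \<in> subformulas f"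
  by (induction f) (auto split: if_splits)

lemma nfw_FG: "FG x \<in> subformulas (nfw M f) \<Longrightarrow> FG x \<in> subformulas f"
  by (induction f) (auto split: if_splits)

lemma nft_GF: "GF x \<in> subformulas (nft M f) \<Longrightarrow> GF x \<in> subformulas f"
  by (induction f) (auto dest: nfw_GF)

lemma nft_FG: "FG x \<in> subformulas (nft M f) \<Longrightarrow> FG x \<in> subformulas f"
  by (induction f) (auto dest: nfw_FG)

lemma GF_sub: "GF x \<in> subformulas y \<Longrightarrow> x \<in> subformulas y"
proof -
  assume h: "GF x \<in> subformulas y"
  have "subformulas (GF x) \<subseteq> subformulas y" by (rule sub_trans[OF h])
  moreover have "x \<in> subformulas (GF x)" by (simp add: self_sub)
  ultimately show ?thesis by blast
qed

lemma build_GF: "GF x \<in> subformulas (build L M f) \<Longrightarrow> set L \<subseteq> subformulas f \<Longrightarrow> x \<in> subformulas f"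
proof (induction L arbitrary: M)
  case Nil
  then have "GF x \<in> subformulas (nft M f)" by (simp only: build.simps)
  then show ?case by (rule GF_sub[OF nft_GF])
next
  case (Cons m L)
  have mf: "m \<in> subformulas f" using Cons.prems(2) by simp
  have Ls: "set L \<subseteq> subformulas f" using Cons.prems(2) by simp
  have "GF x = GF m \<or> GF x \<in> subformulas m \<or> GF x \<in> subformulas (build L (insert m M) f)
        \<or> GF x \<in> subformulas (build L M f)" using Cons.prems(1)
    by (simp only: build.simps subformulas.simps Un_iff insert_iff) blast
  then show ?case
  proof (elim disjE)
    assume "GF x = GF m" then show ?thesis using mf by simp
  next
    assume "GF x \<in> subformulas m"
    then have "GF x \<in> subformulas f" using sub_trans[OF mf] by blast
    then show ?thesis by (rule GF_sub)
  next
    assume "GF x \<in> subformulas (build L (insert m M) f)"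
    then show ?thesis using Cons.IH Ls by blast
  next
    assume "GF x \<in> subformulas (build L M f)"
    then show ?thesis using Cons.IH Ls by blast
  qed
qed

lemma build_FG: "FG x \<in> subformulas (build L M f) \<Longrightarrow> set L \<subseteq> subformulas f \<Longrightarrow> FG x \<in> subformulas f"
proof (induction L arbitrary: M)
  case Nil
  then have "FG x \<in> subformulas (nft M f)" by (simp only: build.simps)
  then show ?case by (rule nft_FG)
next
  case (Cons m L)
  have mf: "m \<in> subformulas f" using Cons.prems(2) by simp
  have Ls: "set L \<subseteq> subformulas f" using Cons.prems(2) by simp
  have "FG x \<in> subformulas m \<or> FG x \<in> subformulas (build L (insert m M) f)
        \<or> FG x \<in> subformulas (build L M f)" using Cons.prems(1)
    by (simp only: build.simps subformulas.simps Un_iff insert_iff ltl.distinct) blast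
  then show ?case
  proof (elim disjE)
    assume "FG x \<in> subformulas m"
    then show ?thesis using sub_trans[OF mf] by blast
  next
    assume "FG x \<in> subformulas (build L (insert m M) f)"
    then show ?thesis using Cons.IH Ls by blast
  next
    assume "FG x \<in> subformulas (build L M f)"
    then show ?thesis using Cons.IH Ls by blast
  qed
qed

lemma nfw_ubw: "ubw_aux b (nfw M f) = 0"
  by (induction f arbitrary: b) auto

lemma nft_ubw: "ubw_aux False (nft M f) = 0"
  by (induction f) (auto simp: nfw_ubw)

lemma build_ubw: "ubw_aux False (build L M f) = 0"
  by (induction L arbitrary: M) (auto simp: nft_ubw)

lemma size_bound_aux: "1 \<le> (n::nat) \<Longrightarrow> 6 * n \<le> 8 ^ n"
proof (induction n rule: dec_induct)
  case base then show ?case by simp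
next
  case (step n) then show ?case by simp
qed

lemma size_bound: "1 \<le> (n::nat) \<Longrightarrow> 2 ^ n * (2*n^2 + n + 3) \<le> 4 ^ (2*n) * n"
proof -
  assume n: "1 \<le> n"
  have "n \<le> n * n" "1 \<le> n * n" using n mult_le_mono[of 1 n 1 n] by simp_all
  then have "2*n^2 + n + 3 \<le> 6 * n * n" unfolding power2_eq_square by linarith
  also have "\<dots> \<le> 8^n * n" using size_bound_aux[OF n] by simp
  finally have "2 ^ n * (2*n^2 + n + 3) \<le> 2^n * (8^n * n)" by simp
  also have "\<dots> = (2*8)^n * n" by (simp add: power_mult_distrib[symmetric])
  also have "\<dots> = 4 ^ (2*n) * n" by (simp add: power_mult)
  finally show ?thesis .
qed

theorem proposition1:
  fixes \<phi> :: "('a::finite) ltl"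
  shows "\<exists>\<phi>'. equiv_ltl \<phi>' \<phi> \<and> first_normal_form \<phi>'
           \<and> size_ltl \<phi>' \<le> 4 ^ (2 * size_ltl \<phi>) * size_ltl \<phi>
           \<and> (\<forall>\<psi>. GF \<psi> \<in> subformulas \<phi>' \<longrightarrow> \<psi> \<in> subformulas \<phi>)
           \<and> (\<forall>\<chi>. FG \<chi> \<in> subformulas \<phi>' \<longrightarrow> FG \<chi> \<in> subformulas \<phi>)"
proof (intro exI conjI allI impI)
  let ?L = "sublist \<phi>"
  let ?p = "build ?L {} \<phi>"
  let ?n = "size_ltl \<phi>"
  show "equiv_ltl ?p \<phi>"
    unfolding equiv_ltl_def
  proof
    fix w
    show "sat w ?p = sat w \<phi>"
      using build_sound[of "{}" w ?L \<phi>] build_complete[of \<phi> "{}" ?L w] sublist_set by blast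
  qed
  show "first_normal_form ?p" unfolding first_normal_form_def ubw_def by (rule build_ubw)
  have "size_ltl ?p + (?n+3) \<le> 2 ^ length ?L * (2*?n^2 + ?n + 3)"
    by (rule build_size) (auto simp: sublist_set sub_size nft_size)
  also have "\<dots> \<le> 4 ^ (2 * ?n) * ?n" unfolding sublist_len by (rule size_bound[OF size_pos])
  finally show "size_ltl ?p \<le> 4 ^ (2 * ?n) * ?n" by simp
  fix x
  show "GF x \<in> subformulas ?p \<Longrightarrow> x \<in> subformulas \<phi>" using build_GF sublist_set by blast
  show "FG x \<in> subformulas ?p \<Longrightarrow> FG x \<in> subformulas \<phi>" using build_FG sublist_set by blast
qed

end
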